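(* Let $\kappa$ be an infinite cardinal and let $X$ be a crowded Hausdorff Baire space which is $\omega_1$-expandable and satisfies $dis^*(X)\leq\kappa$. If $A\subseteq X$ and $|A|\leq\kappa$, then $|\overline{A}|\leq\kappa$.
   Context: All spaces are Hausdorff. A space is crowded if it has no isolated points. $dis^*(X)$ is the least number of closed discrete subsets needed to cover $X$. For a collection $\mathcal{G}$ of subsets of $X$, $ord(x,\mathcal{G})=|\{G\in\mathcal{G}:x\in G\}|$. For a cardinal $\lambda$, $X$ is $\lambda$-expandable if for every closed discrete set $D\subseteq X$ there is a family $\mathcal{G}=\{U_d: d\in D\}$ of open sets with $U_d\cap D=\{d\}$ for each $d\in D$ and $ord(x,\mathcal{G})\leq\lambda$ for every $x\in X$. *)

theory Defs
  imports "HOL-Analysis.Analysis"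
begin

definition crowded_space :: "'a topology \<Rightarrow> bool" where
  "crowded_space X \<longleftrightarrow> (\<forall>x\<in>topspace X. \<not> openin X {x})"

definition baire_space :: "'a topology \<Rightarrow> bool" where
  "baire_space X \<longleftrightarrow>
     (\<forall>\<U>. countable \<U> \<and> (\<forall>U\<in>\<U>. openin X U \<and> X closure_of U = topspace X)
        \<longrightarrow> X closure_of (topspace X \<inter> \<Inter>\<U>) = topspace X)"

definition closed_discrete_in :: "'a topology \<Rightarrow> 'a set \<Rightarrow> bool" where
  "closed_discrete_in X D \<longleftrightarrow> closedin X D \<and> subtopology X D = discrete_topology D"

definition dis_star_le :: "'a topology \<Rightarrow> 'b set \<Rightarrow> bool" where
  "dis_star_le X K \<longleftrightarrow>
     (\<exists>\<F>. \<F> \<lesssim> K \<and> \<Union>\<F> = topspace X \<and> (\<forall>D\<in>\<F>. closed_discrete_in X D))"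

definition ord_fam :: "'a \<Rightarrow> 'a set \<Rightarrow> ('a \<Rightarrow> 'a set) \<Rightarrow> 'a set" where
  "ord_fam x D U = {d\<in>D. x \<in> U d}"

definition omega1_expandable :: "'a topology \<Rightarrow> bool" where
  "omega1_expandable X \<longleftrightarrow>
     (\<forall>D. closed_discrete_in X D \<longrightarrow>
        (\<exists>U. (\<forall>d\<in>D. openin X (U d) \<and> U d \<inter> D = {d}) \<and>
             (\<forall>x\<in>topspace X. ordLeq3 (card_of (ord_fam x D U)) (cardSuc natLeq))))"

end

theory Submission
  imports Defs "HOL-Library.Countable_Set_Type"
begin

unbundle cardinal_syntax

lemma lepoll_card: "A \<lesssim> B \<longleftrightarrow> |A| \<le>o |B|"
  unfolding lepoll_def by (rule card_of_ordLeq)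

lemma closed_discrete_subset:
  assumes "closed_discrete_in X D" "closedin X E" "E \<subseteq> D"
  shows "closed_discrete_in X E"
proof -
  have "subtopology X E = subtopology (subtopology X D) E"
    using assms(3) by (simp add: subtopology_subtopology inf_absorb2)
  also have "\<dots> = discrete_topology E"
    using assms(1,3) unfolding closed_discrete_in_def by (simp add: subtopology_discrete_topology inf_absorb2)
  finally show ?thesis using assms(2) unfolding closed_discrete_in_def by simp
qed

lemma closed_discrete_interior_empty:
  assumes "crowded_space X" "closed_discrete_in X D"
  shows "X interior_of D = {}"
proof (rule ccontr)
  assume "X interior_of D \<noteq> {}"
  then obtain x where x: "x \<in> X interior_of D" by blast
  let ?V = "X interior_of D"
  have V: "openin X ?V" "?V \<subseteq> D" by (auto simp: interior_of_subset)
  have xD: "x \<in> D" using x V by auto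
  have "openin (subtopology X D) {x}"
    using assms(2) xD unfolding closed_discrete_in_def by simp
  then obtain W where W: "openin X W" "{x} = W \<inter> D" by (auto simp: openin_subtopology)
  have "?V \<inter> W = {x}" using W V x by auto
  moreover have "openin X (?V \<inter> W)" using V W by auto
  moreover have "x \<in> topspace X" using V(1) x openin_subset by blast
  ultimately show False using assms(1) unfolding crowded_space_def by metis
qed

theorem mainTheorem5:
  fixes X :: "'a topology" and K :: "'b set" and A :: "'a set"
  assumes "infinite K"
    and "Hausdorff_space X"
    and "crowded_space X"
    and "baire_space X"
    and "omega1_expandable X"
    and "dis_star_le X K"
    and "A \<subseteq> topspace X"
    and "A \<lesssim> K"
  shows "X closure_of A \<lesssim> K"
proof -
  obtain \<F> where F: "\<F> \<lesssim> K" "\<Union>\<F> = topspace X" "\<And>D. D\<in>\<F> \<Longrightarrow> closed_discrete_in X D"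
    using assms(6) unfolding dis_star_le_def by blast
  show ?thesis
  proof (cases "countable K")
    case True
    have cF: "countable \<F>" using countable_lepoll[OF True F(1)] .
    define \<U> where "\<U> = (\<lambda>D. topspace X - D) ` \<F>"
    have "\<forall>U\<in>\<U>. openin X U \<and> X closure_of U = topspace X"
    proof
      fix U assume "U \<in> \<U>"
      then obtain D where D: "D \<in> \<F>" "U = topspace X - D" unfolding \<U>_def by blast
      have cd: "closed_discrete_in X D" using F(3) D by blast
      hence "closedin X D" unfolding closed_discrete_in_def by simp
      hence "openin X U" using D by auto
      moreover have "X closure_of U = topspace X"
        using D(2) closed_discrete_interior_empty[OF assms(3) cd]
        by (simp add: closure_of_complement)
      ultimately show "openin X U \<and> X closure_of U = topspace X" by simp
    qed
    moreover have "countable \<U>" using cF unfolding \<U>_def by simp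
    ultimately have "X closure_of (topspace X \<inter> \<Inter>\<U>) = topspace X"
      using assms(4) unfolding baire_space_def by blast
    moreover have "topspace X \<inter> \<Inter>\<U> = {}" using F(2) unfolding \<U>_def by blast
    ultimately have "topspace X = {}" by simp
    hence "X closure_of A = {}" using closure_of_subset_topspace[of X A] by (simp only: subset_empty)
    thus ?thesis by simp
  next
    case False
    have "\<not> |K| \<le>o natLeq" using False countable_card_le_natLeq by blast
    hence "natLeq <o |K|"
      by (rule iffD1[OF not_ordLeq_iff_ordLess[OF natLeq_Well_order card_of_Well_order]])
    hence om1: "cardSuc natLeq \<le>o |K|"
      by (rule cardSuc_least[OF natLeq_Card_order card_of_Card_order])
    show ?thesis
    proof (rule ccontr)
      assume nc: "\<not> X closure_of A \<lesssim> K"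
      have "\<exists>D\<in>\<F>. \<not> D \<inter> X closure_of A \<lesssim> K"
      proof (rule ccontr)
        assume "\<not> ?thesis"
        hence allD: "\<forall>D\<in>\<F>. |D \<inter> X closure_of A| \<le>o |K|" by (auto simp: lepoll_card)
        have "|\<Union>D\<in>\<F>. D \<inter> X closure_of A| \<le>o |K|"
        proof (rule card_of_UNION_ordLeq_infinite[OF assms(1)])
          show "|\<F>| \<le>o |K|" using F(1) by (simp add: lepoll_card)
        qed (rule allD)
        moreover have "(\<Union>D\<in>\<F>. D \<inter> X closure_of A) = X closure_of A"
          proof -
          have "X closure_of A \<subseteq> \<Union>\<F>" using F(2) closure_of_subset_topspace[of X A] by simp
          thus ?thesis by blast
        qed
        ultimately show False using nc by (simp add: lepoll_card)
      qed
      then obtain D where D: "D \<in> \<F>" and nD: "\<not> D \<inter> X closure_of A \<lesssim> K" by blast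
      define E where "E = D \<inter> X closure_of A"
      have cdD: "closed_discrete_in X D" using F(3) D by blast
      have "closedin X D" using cdD unfolding closed_discrete_in_def by simp
      hence "closedin X E" unfolding E_def by (simp add: closedin_Int)
      hence cE: "closed_discrete_in X E"
        by (rule closed_discrete_subset[OF cdD]) (simp add: E_def)
      have "closed_discrete_in X E \<longrightarrow> (\<exists>U. (\<forall>d\<in>E. openin X (U d) \<and> U d \<inter> E = {d}) \<and>
             (\<forall>x\<in>topspace X. |ord_fam x E U| \<le>o cardSuc natLeq))"
        using assms(5) unfolding omega1_expandable_def by (rule spec)
      hence "\<exists>U. (\<forall>d\<in>E. openin X (U d) \<and> U d \<inter> E = {d}) \<and>
             (\<forall>x\<in>topspace X. |ord_fam x E U| \<le>o cardSuc natLeq)"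
        using cE by (rule mp)
      then obtain U where U0: "\<forall>d\<in>E. openin X (U d) \<and> U d \<inter> E = {d}"
        and ordU0: "\<forall>x\<in>topspace X. |ord_fam x E U| \<le>o cardSuc natLeq"
        by (elim exE conjE)
      have U: "\<And>d. d\<in>E \<Longrightarrow> openin X (U d) \<and> U d \<inter> E = {d}" using U0 by (rule bspec)
      have ordU: "\<And>x. x\<in>topspace X \<Longrightarrow> |ord_fam x E U| \<le>o cardSuc natLeq" using ordU0 by (rule bspec)
      have "\<forall>d\<in>E. \<exists>a\<in>A. a \<in> U d"
      proof
        fix d assume d: "d \<in> E"
        hence "d \<in> X closure_of A" "openin X (U d)" "d \<in> U d" using U[OF d] unfolding E_def by auto
        thus "\<exists>a\<in>A. a \<in> U d" unfolding closure_of_def by blast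
      qed
      hence "E \<subseteq> (\<Union>a\<in>A. ord_fam a E U)" unfolding ord_fam_def by blast
      moreover have "|\<Union>a\<in>A. ord_fam a E U| \<le>o |K|"
      proof (rule card_of_UNION_ordLeq_infinite[OF assms(1)])
        show "|A| \<le>o |K|" using assms(8) by (simp add: lepoll_card)
        show "\<forall>a\<in>A. |ord_fam a E U| \<le>o |K|"
        proof
          fix a assume "a \<in> A"
          hence "a \<in> topspace X" using assms(7) by blast
          thus "|ord_fam a E U| \<le>o |K|" using ordU om1 ordLeq_transitive by blast
        qed
      qed
      ultimately have "E \<lesssim> K"
        using lepoll_trans[OF subset_imp_lepoll] lepoll_card by blast
      thus False using nD unfolding E_def by simp
    qed
  qed
qed

end
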